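(* Let $G$ be a simple graph on $[n]$ with connected components $G_1,\dots,G_c$, and for each $i$ let $T_i$ be a fundamental independent set of $G_i$. Then $T=T_1\cup\cdots\cup T_c$ is a fundamental independent set of the cone graph $G^*$.
   Context: The cone graph $G^*$ has vertex set $[n+1]$ and edge set $E(G)\cup\{\{i,n+1\}: i\in[n]\}$. For a graph $H$ and $U\subseteq V(H)$, $N_H(U)$ is the set of vertices adjacent to some vertex of $U$. For an independent set $T$ of $H$, $B_H(T)$ is the bipartite graph with vertex set $T\cup N_H(T)$ and edge set $\{\{v,w\}: v\in T, w\in N_H(T), \{v,w\}\in E(H)\}$. An independent set $T$ of $H$ is fundamental in $H$ if (1) $B_H(T)$ is connected, and (2) if $T\cup N_H(T)\neq V(H)$, then every connected component of the induced subgraph $H\setminus V(B_H(T))$ on $V(H)\setminus (T\cup N_H(T))$ contains an odd cycle. Convention: the graph with empty vertex set is regarded as connected (so $T=\emptyset$ is fundamental in $H$ exactly when every connected component of $H$ contains an odd cycle). *)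

theory Defs
  imports Main
begin

text \<open>A graph is a pair (vertex set, edge set); edges are 2-element sets of vertices.\<close>
type_synonym graph = "nat set \<times> nat set set"

definition simple_graph_on :: "nat \<Rightarrow> nat set set \<Rightarrow> bool" where
  "simple_graph_on n E \<longleftrightarrow>
     (\<forall>e\<in>E. \<exists>u v. u \<noteq> v \<and> e = {u, v} \<and> u \<in> {1..n} \<and> v \<in> {1..n})"

definition cone :: "nat \<Rightarrow> nat set set \<Rightarrow> graph" where
  "cone n E = ({1..n+1}, E \<union> {{i, n+1} | i. i \<in> {1..n}})"

definition nbhd :: "graph \<Rightarrow> nat set \<Rightarrow> nat set" where
  "nbhd H U = {w \<in> fst H. \<exists>u\<in>U. {u, w} \<in> snd H}"

definition independent :: "graph \<Rightarrow> nat set \<Rightarrow> bool" where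
  "independent H T \<longleftrightarrow> T \<subseteq> fst H \<and> (\<forall>u\<in>T. \<forall>v\<in>T. {u, v} \<notin> snd H)"

definition bip :: "graph \<Rightarrow> nat set \<Rightarrow> graph" where
  "bip H T = (T \<union> nbhd H T,
              {e \<in> snd H. \<exists>v\<in>T. \<exists>w\<in>nbhd H T. e = {v, w}})"

definition induced :: "graph \<Rightarrow> nat set \<Rightarrow> graph" where
  "induced H S = (S, {e \<in> snd H. e \<subseteq> S})"

definition reach :: "graph \<Rightarrow> nat \<Rightarrow> nat \<Rightarrow> bool" where
  "reach H = (\<lambda>x y. {x, y} \<in> snd H \<and> x \<in> fst H \<and> y \<in> fst H)\<^sup>*\<^sup>*"

text \<open>Connectedness; the empty graph is connected (vacuously).\<close>
definition connected_graph :: "graph \<Rightarrow> bool" where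
  "connected_graph H \<longleftrightarrow> (\<forall>u\<in>fst H. \<forall>v\<in>fst H. reach H u v)"

definition components :: "graph \<Rightarrow> nat set set" where
  "components H = {{v \<in> fst H. reach H u v} | u. u \<in> fst H}"

definition has_odd_cycle :: "graph \<Rightarrow> bool" where
  "has_odd_cycle H \<longleftrightarrow> (\<exists>cs. distinct cs \<and> length cs \<ge> 3 \<and> odd (length cs) \<and>
      set cs \<subseteq> fst H \<and>
      (\<forall>i<length cs. {cs ! i, cs ! ((i + 1) mod length cs)} \<in> snd H))"

definition fundamental :: "graph \<Rightarrow> nat set \<Rightarrow> bool" where
  "fundamental H T \<longleftrightarrow> independent H T \<and> connected_graph (bip H T) \<and>
     (T \<union> nbhd H T \<noteq> fst H \<longrightarrow>
        (\<forall>C \<in> components (induced H (fst H - (T \<union> nbhd H T))).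
            has_odd_cycle (induced H C)))"

end

theory Submission
  imports Defs
begin

lemma reach_refl: "reach H x x" unfolding reach_def by simp

lemma reach_step: "reach H x y \<Longrightarrow> {y,z} \<in> snd H \<Longrightarrow> y \<in> fst H \<Longrightarrow> z \<in> fst H \<Longrightarrow> reach H x z"
  unfolding reach_def by (simp add: rtranclp.rtrancl_into_rtrancl)

lemma reach_trans: "reach H x y \<Longrightarrow> reach H y z \<Longrightarrow> reach H x z"
  unfolding reach_def by (rule rtranclp_trans)

lemma reach_sym: assumes "reach H x y" shows "reach H y x"
  using assms unfolding reach_def
proof (induction rule: rtranclp_induct)
  case base then show ?case by simp
next
  case (step y z)
  have "{z,y} \<in> snd H \<and> z \<in> fst H \<and> y \<in> fst H" using step.hyps(2) by (simp add: insert_commute)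
  then show ?case using step.IH converse_rtranclp_into_rtranclp[of "\<lambda>x y. {x, y} \<in> snd H \<and> x \<in> fst H \<and> y \<in> fst H" z y x] by simp
qed

lemma odd_cycle_mono: "has_odd_cycle (V1,E1) \<Longrightarrow> V1 \<subseteq> V2 \<Longrightarrow> E1 \<subseteq> E2 \<Longrightarrow> has_odd_cycle (V2,E2)"
proof -
  assume a: "has_odd_cycle (V1,E1)" "V1 \<subseteq> V2" "E1 \<subseteq> E2"
  then obtain cs where cs: "distinct cs" "length cs \<ge> 3" "odd (length cs)" "set cs \<subseteq> V1"
      "\<forall>i<length cs. {cs ! i, cs ! ((i + 1) mod length cs)} \<in> E1"
    unfolding has_odd_cycle_def by auto
  show ?thesis unfolding has_odd_cycle_def
    by (rule exI[of _ cs]) (use cs a in auto)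
qed

lemma fund_indep: "fundamental H T \<Longrightarrow> independent H T" by (simp add: fundamental_def)

lemma fund_odd: "fundamental H T \<Longrightarrow> T \<union> nbhd H T \<noteq> fst H \<Longrightarrow>
   K \<in> components (induced H (fst H - (T \<union> nbhd H T))) \<Longrightarrow> has_odd_cycle (induced H K)"
  unfolding fundamental_def by blast

lemma comp_mem: "u \<in> fst X \<Longrightarrow> {v\<in>fst X. reach X u v} \<in> components X"
  unfolding components_def by blast

lemma reach_transfer:
  assumes "reach X u v" "u \<in> S"
    "\<And>x y. x \<in> S \<Longrightarrow> {x,y} \<in> snd X \<Longrightarrow> x \<in> fst X \<Longrightarrow> y \<in> fst X \<Longrightarrow>
        y \<in> S \<and> {x,y} \<in> snd Y \<and> x \<in> fst Y \<and> y \<in> fst Y"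
  shows "v \<in> S \<and> reach Y u v"
  using assms(1) unfolding reach_def
proof (induction rule: rtranclp_induct)
  case base then show ?case using assms(2) by simp
next
  case (step y z)
  then have "z \<in> S \<and> {y,z} \<in> snd Y \<and> y \<in> fst Y \<and> z \<in> fst Y" using assms(3) by blast
  then show ?case using step.IH reach_step[of Y u y z, unfolded reach_def] by simp
qed

lemma edge_of_cycle: "has_odd_cycle X \<Longrightarrow> \<exists>x y. {x,y} \<in> snd X"
proof -
  assume "has_odd_cycle X"
  then obtain cs where "length cs \<ge> 3" "\<forall>i<length cs. {cs ! i, cs ! ((i + 1) mod length cs)} \<in> snd X"
    unfolding has_odd_cycle_def by blast
  then have "{cs ! 0, cs ! ((0 + 1) mod length cs)} \<in> snd X" by (metis less_le_trans zero_less_numeral)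
  then show ?thesis by blast
qed

lemma triangle:
  assumes "a \<noteq> b" "b \<noteq> c" "a \<noteq> c" "{a,b} \<in> E'" "{b,c} \<in> E'" "{c,a} \<in> E'" "a \<in> V'" "b \<in> V'" "c \<in> V'"
  shows "has_odd_cycle (V',E')"
  unfolding has_odd_cycle_def
proof (rule exI[of _ "[a,b,c]"], intro conjI allI impI)
  fix i assume "i < length [a,b,c]"
  then have "i = 0 \<or> i = 1 \<or> i = 2" by auto
  then show "{[a, b, c] ! i, [a, b, c] ! ((i + 1) mod length [a, b, c])} \<in> snd (V', E')"
    using assms by auto
qed (use assms in auto)

theorem lemma3p8:
  fixes n :: nat and E :: "nat set set" and Tf :: "nat set \<Rightarrow> nat set"
  assumes "n \<ge> 1"
    and "simple_graph_on n E"
    and "\<forall>C \<in> components ({1..n}, E). fundamental (induced ({1..n}, E) C) (Tf C)"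
  shows "fundamental (cone n E) (\<Union>C \<in> components ({1..n}, E). Tf C)"
proof -
  define H where "H = cone n E"
  define CS where "CS = components ({1..n}, E)"
  define T where "T = (\<Union>C\<in>CS. Tf C)"
  have fH: "fst H = {1..n+1}" and sH: "snd H = E \<union> {{i, n+1} | i. i \<in> {1..n}}"
    by (simp_all add: H_def cone_def)
  have edgeV: "\<And>x y. {x,y} \<in> E \<Longrightarrow> x \<in> {1..n} \<and> y \<in> {1..n} \<and> x \<noteq> y"
  proof -
    fix x y assume "{x,y} \<in> E"
    then obtain a b where "a \<noteq> b" "{x,y} = {a,b}" "a \<in> {1..n}" "b \<in> {1..n}"
      using assms(2) unfolding simple_graph_on_def by blast
    then show "x \<in> {1..n} \<and> y \<in> {1..n} \<and> x \<noteq> y" by (auto simp: doubleton_eq_iff)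
  qed
  have apex: "\<And>x y. {x,y} \<in> {{i, n+1} | i. i \<in> {1..n}} \<Longrightarrow> x = n+1 \<or> y = n+1"
    by (auto simp: doubleton_eq_iff)
  have EH: "\<And>x y. {x,y} \<in> snd H \<Longrightarrow> x \<le> n \<Longrightarrow> y \<le> n \<Longrightarrow> {x,y} \<in> E"
  proof -
    fix x y assume "{x,y} \<in> snd H" "x \<le> n" "y \<le> n"
    then have "{x,y} \<in> E \<or> {x,y} \<in> {{i, n+1} | i. i \<in> {1..n}}" using sH by simp
    then show "{x,y} \<in> E" using apex[of x y] \<open>x \<le> n\<close> \<open>y \<le> n\<close> by auto
  qed
  have compD: "\<And>C. C \<in> CS \<Longrightarrow> \<exists>u\<in>{1..n}. C = {v\<in>{1..n}. reach ({1..n},E) u v}"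
    by (auto simp: CS_def components_def)
  have compV: "\<And>C. C \<in> CS \<Longrightarrow> C \<subseteq> {1..n}" using compD by blast
  have P2: "\<And>C x y. C \<in> CS \<Longrightarrow> x \<in> C \<Longrightarrow> {x,y} \<in> E \<Longrightarrow> y \<in> C"
  proof -
    fix C x y assume "C \<in> CS" "x\<in>C" "{x,y}\<in>E"
    then obtain u where C: "C = {v\<in>{1..n}. reach ({1..n},E) u v}" using compD by blast
    with \<open>x\<in>C\<close> have "reach ({1..n},E) u x" by simp
    then have "reach ({1..n},E) u y" using edgeV[OF \<open>{x,y}\<in>E\<close>] \<open>{x,y}\<in>E\<close>
      reach_step[of "({1..n},E)" u x y] by simp
    then show "y \<in> C" using C edgeV[OF \<open>{x,y}\<in>E\<close>] by simp
  qed
  have P3: "\<And>C C' x. C \<in> CS \<Longrightarrow> C' \<in> CS \<Longrightarrow> x \<in> C \<Longrightarrow> x \<in> C' \<Longrightarrow> C \<subseteq> C'"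
  proof -
    fix C C' x assume a: "C \<in> CS" "C' \<in> CS" "x \<in> C" "x \<in> C'"
    then obtain u where C: "C = {v\<in>{1..n}. reach ({1..n},E) u v}" using compD by blast
    obtain u' where C': "C' = {v\<in>{1..n}. reach ({1..n},E) u' v}" using compD a by blast
    show "C \<subseteq> C'"
    proof
      fix v assume "v \<in> C"
      then have "reach ({1..n},E) u v" "v \<in> {1..n}" using C by auto
      moreover have "reach ({1..n},E) x u" using a C reach_sym by blast
      moreover have "reach ({1..n},E) u' x" using a C' by blast
      ultimately show "v \<in> C'" using C' reach_trans by blast
    qed
  qed
  have P3eq: "\<And>C C' x. C \<in> CS \<Longrightarrow> C' \<in> CS \<Longrightarrow> x \<in> C \<Longrightarrow> x \<in> C' \<Longrightarrow> C = C'"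
    using P3 by blast
  have P4: "\<And>x. x \<in> {1..n} \<Longrightarrow> \<exists>C\<in>CS. x \<in> C"
  proof -
    fix x :: nat assume x: "x \<in> {1..n}"
    have "{v\<in>{1..n}. reach ({1..n},E) x v} \<in> CS" unfolding CS_def components_def fst_conv using x by (intro CollectI exI[of _ x]) simp
    moreover have "x \<in> {v\<in>{1..n}. reach ({1..n},E) x v}" using x by (simp add: reach_refl)
    ultimately show "\<exists>C\<in>CS. x \<in> C" by (rule rev_bexI)
  qed
  have fundC: "\<And>C. C \<in> CS \<Longrightarrow> fundamental (induced ({1..n},E) C) (Tf C)"
    using assms(3) unfolding CS_def by blast
  have TC_sub: "\<And>C. C \<in> CS \<Longrightarrow> Tf C \<subseteq> C"
  proof -
    fix C assume "C \<in> CS"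
    then have "independent (induced ({1..n},E) C) (Tf C)" using fundC fund_indep by blast
    then show "Tf C \<subseteq> C" by (simp add: independent_def induced_def)
  qed
  have TC_ind: "\<And>C u v. C \<in> CS \<Longrightarrow> u \<in> Tf C \<Longrightarrow> v \<in> Tf C \<Longrightarrow> {u,v} \<in> E \<Longrightarrow> False"
  proof -
    fix C u v assume a: "C \<in> CS" "u \<in> Tf C" "v \<in> Tf C" "{u,v} \<in> E"
    then have "{u,v} \<subseteq> C" using TC_sub by blast
    have "independent (induced ({1..n},E) C) (Tf C)" using fundC a(1) fund_indep by blast
    then have "{u,v} \<notin> snd (induced ({1..n},E) C)" using a(2,3) unfolding independent_def by blast
    moreover have "{u,v} \<in> snd (induced ({1..n},E) C)" using \<open>{u,v} \<subseteq> C\<close> a(4) unfolding induced_def by simp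
    ultimately show False by contradiction
  qed
  have T_sub: "T \<subseteq> {1..n}" using TC_sub compV T_def by blast
  have indep: "independent H T"
    unfolding independent_def
  proof (intro conjI ballI)
    show "T \<subseteq> fst H" using T_sub fH by auto
  next
    fix u v assume uv: "u \<in> T" "v \<in> T"
    show "{u,v} \<notin> snd H"
    proof
      assume e: "{u,v} \<in> snd H"
      have "u \<le> n" "v \<le> n" using uv T_sub by auto
      then have "{u,v} \<in> E" using EH[OF e] by blast
      obtain C where C: "C \<in> CS" "u \<in> Tf C" using uv T_def by blast
      obtain C' where C': "C' \<in> CS" "v \<in> Tf C'" using uv T_def by blast
      have "v \<in> C" using P2[OF C(1) _ \<open>{u,v} \<in> E\<close>] C TC_sub by blast
      then have "C = C'" using P3eq[OF C(1) C'(1)] C' TC_sub by blast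
      then show False using TC_ind C C' \<open>{u,v} \<in> E\<close> by blast
    qed
  qed
  have apexE: "\<And>i. i \<in> {1..n} \<Longrightarrow> {i, n+1} \<in> snd H" using sH by blast
  have EsubH: "E \<subseteq> snd H" using sH by blast
  have "fundamental H T"
    unfolding fundamental_def
  proof (intro conjI impI ballI)
    show "independent H T" by (rule indep)
  next
    show "connected_graph (bip H T)"
    proof (cases "T = {}")
      case True
      then show ?thesis by (simp add: connected_graph_def bip_def nbhd_def)
    next
      case False
      then obtain t0 where t0: "t0 \<in> T" by blast
      have "t0 \<in> {1..n}" using t0 T_sub by blast
      then have "{t0, n+1} \<in> snd H" using apexE by blast
      then have apexN: "n+1 \<in> nbhd H T" unfolding nbhd_def using t0 fH by auto
      have fB: "fst (bip H T) = T \<union> nbhd H T" by (simp add: bip_def)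
      have sB: "snd (bip H T) = {e \<in> snd H. \<exists>v\<in>T. \<exists>w\<in>nbhd H T. e = {v, w}}" by (simp add: bip_def)
      have tT: "\<And>t. t \<in> T \<Longrightarrow> reach (bip H T) t (n+1)"
      proof -
        fix t assume t: "t \<in> T"
        have "{t, n+1} \<in> snd (bip H T)" unfolding sB using t apexN apexE T_sub by blast
        then show "reach (bip H T) t (n+1)" using reach_step[OF reach_refl] t apexN fB by blast
      qed
      have toapex: "\<And>x. x \<in> fst (bip H T) \<Longrightarrow> reach (bip H T) x (n+1)"
      proof -
        fix x assume x: "x \<in> fst (bip H T)"
        show "reach (bip H T) x (n+1)"
        proof (cases "x \<in> T")
          case True then show ?thesis using tT by blast
        next
          case False
          then have xN: "x \<in> nbhd H T" using x fB by blast
          then obtain t where t: "t \<in> T" "{t,x} \<in> snd H" unfolding nbhd_def by blast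
          have "{x,t} \<in> snd (bip H T)" unfolding sB using t xN by (auto simp: insert_commute)
          then have "reach (bip H T) x t" using reach_step[OF reach_refl] t xN fB by blast
          then show ?thesis using tT[OF t(1)] reach_trans by blast
        qed
      qed
      show ?thesis unfolding connected_graph_def
      proof (intro ballI)
        fix x y assume "x \<in> fst (bip H T)" "y \<in> fst (bip H T)"
        then have "reach (bip H T) x (n+1)" "reach (bip H T) (n+1) y" using toapex reach_sym by blast+
        then show "reach (bip H T) x y" by (rule reach_trans)
      qed
    qed
  next
    fix K assume ne: "T \<union> nbhd H T \<noteq> fst H"
      and K: "K \<in> components (induced H (fst H - (T \<union> nbhd H T)))"
    define R where "R = fst H - (T \<union> nbhd H T)"
    have KR: "K \<in> components (induced H R)" using K R_def by simp
    have fIR: "fst (induced H R) = R" by (simp add: induced_def)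
    obtain u where u: "u \<in> R" "K = {v \<in> R. reach (induced H R) u v}"
      using KR unfolding components_def fIR by blast
    show "has_odd_cycle (induced H K)"
    proof (cases "T = {}")
      case True
      have R1: "R = {1..n+1}" using True R_def fH by (simp add: nbhd_def)
      have "1 \<in> {1..n}" using assms(1) by simp
      then obtain C where C: "C \<in> CS" "1 \<in> C" using P4 by blast
      have TC0: "Tf C = {}" using True C(1) T_def by blast
      define GC where "GC = induced ({1..n},E) C"
      have fGC: "fst GC = C" by (simp add: GC_def induced_def)
      have nb0: "nbhd GC {} = {}" by (simp add: nbhd_def)
      have neC: "Tf C \<union> nbhd GC (Tf C) \<noteq> fst GC" using TC0 nb0 fGC C(2) by auto
      have "1 \<in> fst (induced GC (fst GC - (Tf C \<union> nbhd GC (Tf C))))"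
        using TC0 nb0 fGC C(2) by (simp add: induced_def)
      then have "has_odd_cycle (induced GC {v \<in> fst (induced GC (fst GC - (Tf C \<union> nbhd GC (Tf C)))).
          reach (induced GC (fst GC - (Tf C \<union> nbhd GC (Tf C)))) 1 v})" (is "has_odd_cycle (induced GC ?K0)")
        using fund_odd[OF fundC[OF C(1), folded GC_def] neC] comp_mem by blast
      then obtain a b where "{a,b} \<in> snd (induced GC ?K0)" using edge_of_cycle by blast
      then have ab: "{a,b} \<in> E" by (simp add: induced_def GC_def)
      then have abV: "a \<in> {1..n}" "b \<in> {1..n}" "a \<noteq> b" using edgeV by blast+
      have sIR: "snd (induced H R) = {e \<in> snd H. e \<subseteq> R}" by (simp add: induced_def)
      have toap: "\<And>x. x \<in> R \<Longrightarrow> reach (induced H R) x (n+1)"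
      proof -
        fix x assume x: "x \<in> R"
        show "reach (induced H R) x (n+1)"
        proof (cases "x = n+1")
          case True then show ?thesis by (simp add: reach_refl)
        next
          case False
          then have "x \<in> {1..n}" using x R1 by auto
          then have "{x,n+1} \<in> snd (induced H R)" using apexE R1 sIR by auto
          then show ?thesis using reach_step[OF reach_refl] x R1 fIR by auto
        qed
      qed
      have fromap: "\<And>x. x \<in> {1..n} \<Longrightarrow> reach (induced H R) (n+1) x"
      proof -
        fix x assume x: "x \<in> {1..n}"
        then have "{n+1,x} \<in> snd (induced H R)" using apexE R1 sIR by (auto simp: insert_commute)
        then show "reach (induced H R) (n+1) x" using reach_step[OF reach_refl] x R1 fIR by auto
      qed
      have ua: "reach (induced H R) u (n+1)" using toap u(1) by blast
      have ub: "reach (induced H R) u a" "reach (induced H R) u b"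
        using reach_trans[OF ua fromap] abV by blast+
      have inK: "a \<in> K" "b \<in> K" "n+1 \<in> K"
        using u ua ub abV R1 by auto
      have "{a,b} \<in> {e \<in> snd H. e \<subseteq> K}" using ab EsubH inK by auto
      moreover have "{b,n+1} \<in> {e \<in> snd H. e \<subseteq> K}" using apexE abV inK by auto
      moreover have "{n+1,a} \<in> {e \<in> snd H. e \<subseteq> K}" using apexE abV inK by (auto simp: insert_commute)
      ultimately have "has_odd_cycle (K, {e \<in> snd H. e \<subseteq> K})"
        using triangle[of a b "n+1"] abV inK by auto
      then show ?thesis by (simp add: induced_def)
    next
      case False
      then obtain t0 where t0: "t0 \<in> T" by blast
      have "t0 \<in> {1..n}" using t0 T_sub by blast
      then have "{t0, n+1} \<in> snd H" using apexE by blast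
      then have apexN: "n+1 \<in> nbhd H T" unfolding nbhd_def using t0 fH by auto
      have RV: "R \<subseteq> {1..n}"
      proof
        fix x assume "x \<in> R"
        then have "x \<in> {1..n+1}" "x \<noteq> n+1" using fH apexN R_def by auto
        then show "x \<in> {1..n}" by auto
      qed
      obtain C where C: "C \<in> CS" "u \<in> C" using P4 RV u(1) by blast
      define GC where "GC = induced ({1..n},E) C"
      define TC where "TC = Tf C"
      define RC where "RC = fst GC - (TC \<union> nbhd GC TC)"
      have fGC: "fst GC = C" and sGC: "snd GC = {e\<in>E. e \<subseteq> C}" by (simp_all add: GC_def induced_def)
      have CV: "C \<subseteq> {1..n}" using compV C(1) by blast
      have RCeq: "\<And>v. v \<in> C \<Longrightarrow> v \<in> R \<longleftrightarrow> v \<in> RC"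
      proof -
        fix v assume vC: "v \<in> C"
        have vV: "v \<in> {1..n}" using vC CV by blast
        have a: "v \<in> T \<longleftrightarrow> v \<in> TC"
        proof
          assume "v \<in> T"
          then obtain C' where C': "C' \<in> CS" "v \<in> Tf C'" using T_def by blast
          then have "C' = C" using P3eq[OF C'(1) C(1)] TC_sub vC by blast
          then show "v \<in> TC" using C' TC_def by simp
        next
          assume "v \<in> TC" then show "v \<in> T" using TC_def T_def C(1) by blast
        qed
        have b: "v \<in> nbhd H T \<longleftrightarrow> v \<in> nbhd GC TC"
        proof
          assume "v \<in> nbhd H T"
          then obtain t where t: "t \<in> T" "{t,v} \<in> snd H" unfolding nbhd_def by blast
          obtain C' where C': "C' \<in> CS" "t \<in> Tf C'" using t T_def by blast
          have tC': "t \<in> C'" using C' TC_sub by blast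
          have "t \<le> n" "v \<le> n" using t T_sub vV by auto
          then have tvE: "{t,v} \<in> E" using EH t(2) by blast
          have "v \<in> C'" using P2[OF C'(1) tC' tvE] .
          then have "C' = C" using P3eq[OF C'(1) C(1)] vC by blast
          then have "t \<in> TC" "t \<in> C" using C' tC' TC_def by simp_all
          then show "v \<in> nbhd GC TC" unfolding nbhd_def fGC sGC using tvE vC by blast
        next
          assume "v \<in> nbhd GC TC"
          then obtain t where t: "t \<in> TC" "{t,v} \<in> E" unfolding nbhd_def sGC by blast
          have "t \<in> T" using t(1) TC_def T_def C(1) by blast
          moreover have "v \<in> fst H" using vV fH by auto
          ultimately show "v \<in> nbhd H T" unfolding nbhd_def using t(2) EsubH by blast
        qed
        have "v \<in> fst H" using vV fH by auto
        then show "v \<in> R \<longleftrightarrow> v \<in> RC" unfolding R_def RC_def fGC using a b vC by blast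
      qed
      have RCC: "RC \<subseteq> C" unfolding RC_def fGC by blast
      have RCR: "RC \<subseteq> R" using RCeq RCC by blast
      have uRC: "u \<in> RC" using RCeq C u by blast
      have neC: "TC \<union> nbhd GC TC \<noteq> fst GC" using uRC RC_def by auto
      define K' where "K' = {v\<in>RC. reach (induced GC RC) u v}"
      have fIRC: "fst (induced GC RC) = RC" by (simp add: induced_def)
      have "K' \<in> components (induced GC RC)" unfolding K'_def using comp_mem[of u "induced GC RC"] fIRC uRC by simp
      then have odd: "has_odd_cycle (induced GC K')"
        using fund_odd[OF fundC[OF C(1), folded GC_def TC_def] neC] RC_def by simp
      have sIR: "snd (induced H R) = {e \<in> snd H. e \<subseteq> R}" by (simp add: induced_def)
      have sIRC: "snd (induced GC RC) = {e \<in> E. e \<subseteq> C \<and> e \<subseteq> RC}" by (simp add: induced_def sGC)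
      have KK: "K = K'"
      proof
        show "K \<subseteq> K'"
        proof
          fix v assume "v \<in> K"
          then have vr: "reach (induced H R) u v" using u by blast
          have "v \<in> RC \<and> reach (induced GC RC) u v"
          proof (rule reach_transfer[OF vr uRC])
            fix x y assume xy: "x \<in> RC" "{x,y} \<in> snd (induced H R)" "x \<in> fst (induced H R)" "y \<in> fst (induced H R)"
            then have yR: "y \<in> R" "x \<in> R" using fIR by auto
            then have "x \<le> n" "y \<le> n" using RV by auto
            moreover have "{x,y} \<in> snd H" using xy(2) sIR by blast
            ultimately have xyE: "{x,y} \<in> E" using EH by blast
            have "y \<in> C" using P2[OF C(1) _ xyE] xy(1) RCC by blast
            then have yRC: "y \<in> RC" using RCeq yR by blast
            then show "y \<in> RC \<and> {x, y} \<in> snd (induced GC RC) \<and> x \<in> fst (induced GC RC) \<and> y \<in> fst (induced GC RC)"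
              using xyE xy(1) RCC fIRC sIRC by auto
          qed
          then show "v \<in> K'" unfolding K'_def by blast
        qed
      next
        show "K' \<subseteq> K"
        proof
          fix v assume "v \<in> K'"
          then have vr: "reach (induced GC RC) u v" and vRC: "v \<in> RC" unfolding K'_def by blast+
          have "v \<in> UNIV \<and> reach (induced H R) u v"
          proof (rule reach_transfer[OF vr, of UNIV])
            fix x y assume xy: "{x,y} \<in> snd (induced GC RC)" "x \<in> fst (induced GC RC)" "y \<in> fst (induced GC RC)"
            then show "y \<in> UNIV \<and> {x, y} \<in> snd (induced H R) \<and> x \<in> fst (induced H R) \<and> y \<in> fst (induced H R)"
              using fIRC sIRC fIR sIR RCR EsubH by auto
          qed simp
          then show "v \<in> K" using u vRC RCR by blast
        qed
      qed
      have "has_odd_cycle (K', {e \<in> snd GC. e \<subseteq> K'})" using odd by (simp add: induced_def)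
      then have "has_odd_cycle (K, {e \<in> snd H. e \<subseteq> K})"
        by (rule odd_cycle_mono) (use KK sGC EsubH in auto)
      then show ?thesis by (simp add: induced_def)
    qed
  qed
  then show ?thesis unfolding H_def T_def CS_def .
qed

end
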